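(* Let $n\ge1$, let $f:\mathbb{R}\to\mathbb{R}$ satisfy (A1) and (A2), and let $c\in\mathbb{R}^n$ with $0<|c|<\sqrt2$. Then there exists $u\in H^2(\mathbb{R}^n)$ with $u\not\equiv0$ and $P_c(u)=0$.
   Context: (A1) $f$ is differentiable almost everywhere and $\liminf_{u\to-\infty}\big(f(u)+u\big)>-\infty$. (A2) There are constants $C_1>0$, $p\ge1$, $q>1$ with $|f(u)-f(v)|\le C_1(|u|+|v|)^{p-1}|u-v|$ and $|f(u)|\le C_1|u|^q$ for all $u,v\in\mathbb{R}$; if $n>4$ one also assumes $p,q<\frac{n+4}{n-4}$. For $c\in\mathbb{R}^n$ and $z\in H^2(\mathbb{R}^n)$, $\|z\|^2=\int_{\mathbb{R}^n}(\Delta z)^2-(c\cdot\nabla z)^2+z^2\,dx$ and $P_c(z)=\|z\|^2+\int_{\mathbb{R}^n}zf(z)\,dx$. *)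

theory Defs
  imports "HOL-Analysis.Analysis"
begin

definition partial :: "'n::finite \<Rightarrow> (real^'n \<Rightarrow> real) \<Rightarrow> real^'n \<Rightarrow> real" where
  "partial i \<phi> x = frechet_derivative \<phi> (at x) (axis i 1)"

definition smooth_fun :: "(real^'n::finite \<Rightarrow> real) \<Rightarrow> bool" where
  "smooth_fun \<phi> \<longleftrightarrow> (\<forall>is::'n list. \<forall>x. (foldr partial is \<phi>) differentiable (at x))"

definition test_fun :: "(real^'n::finite \<Rightarrow> real) \<Rightarrow> bool" where
  "test_fun \<phi> \<longleftrightarrow> smooth_fun \<phi> \<and> compact (closure {x. \<phi> x \<noteq> 0})"

definition L2 :: "(real^'n::finite \<Rightarrow> real) \<Rightarrow> bool" where
  "L2 u \<longleftrightarrow> u \<in> borel_measurable lebesgue \<and> integrable lebesgue (\<lambda>x. (u x)^2)"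

definition weak_partial :: "(real^'n::finite \<Rightarrow> real) \<Rightarrow> 'n \<Rightarrow> (real^'n \<Rightarrow> real) \<Rightarrow> bool" where
  "weak_partial u i g \<longleftrightarrow> (\<forall>\<phi>. test_fun \<phi> \<longrightarrow>
     (\<integral>x. u x * partial i \<phi> x \<partial>lebesgue) = - (\<integral>x. g x * \<phi> x \<partial>lebesgue))"

definition weak_partial2 :: "(real^'n::finite \<Rightarrow> real) \<Rightarrow> 'n \<Rightarrow> 'n \<Rightarrow> (real^'n \<Rightarrow> real) \<Rightarrow> bool" where
  "weak_partial2 u i j h \<longleftrightarrow> (\<forall>\<phi>. test_fun \<phi> \<longrightarrow>
     (\<integral>x. u x * partial i (partial j \<phi>) x \<partial>lebesgue) = (\<integral>x. h x * \<phi> x \<partial>lebesgue))"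

definition H2_with :: "(real^'n::finite \<Rightarrow> real) \<Rightarrow> ('n \<Rightarrow> real^'n \<Rightarrow> real)
    \<Rightarrow> ('n \<Rightarrow> 'n \<Rightarrow> real^'n \<Rightarrow> real) \<Rightarrow> bool" where
  "H2_with u G H \<longleftrightarrow> L2 u \<and> (\<forall>i. L2 (G i) \<and> weak_partial u i (G i))
     \<and> (\<forall>i j. L2 (H i j) \<and> weak_partial2 u i j (H i j))"

text \<open>P_c(u) = ||u||^2 + int u f(u), computed from the weak derivatives.\<close>
definition Pc :: "real^'n::finite \<Rightarrow> (real \<Rightarrow> real) \<Rightarrow> (real^'n \<Rightarrow> real)
    \<Rightarrow> ('n \<Rightarrow> real^'n \<Rightarrow> real) \<Rightarrow> ('n \<Rightarrow> 'n \<Rightarrow> real^'n \<Rightarrow> real) \<Rightarrow> real" where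
  "Pc c f u G H =
     (\<integral>x. (\<Sum>i\<in>UNIV. H i i x)^2 - (\<Sum>i\<in>UNIV. c$i * G i x)^2 + (u x)^2 \<partial>lebesgue)
     + (\<integral>x. u x * f (u x) \<partial>lebesgue)"

end

theory Submission
  imports Defs
begin


definition dd :: "(real^'n::finite \<Rightarrow> real) \<Rightarrow> 'n \<Rightarrow> (real^'n \<Rightarrow> real) \<Rightarrow> bool" where
  "dd F i F' \<longleftrightarrow> (\<forall>x. ((\<lambda>s. F (x + s *\<^sub>R axis i 1)) has_field_derivative F' x) (at 0))"

lemma dd_at:
  assumes "dd F i F'"
  shows "((\<lambda>s. F (x + s *\<^sub>R axis i 1)) has_field_derivative F' (x + t *\<^sub>R axis i 1)) (at t)"
proof -
  have "((\<lambda>s. F ((x + t *\<^sub>R axis i 1) + s *\<^sub>R axis i 1)) has_field_derivative F' (x + t *\<^sub>R axis i 1)) (at 0)"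
    using assms unfolding dd_def by blast
  then have "((\<lambda>s. F (x + (s + t) *\<^sub>R axis i 1)) has_field_derivative F' (x + t *\<^sub>R axis i 1)) (at 0)"
    by (simp add: algebra_simps scaleR_add_left)
  then show ?thesis
    using DERIV_shift[of "\<lambda>s. F (x + s *\<^sub>R axis i 1)" "F' (x + t *\<^sub>R axis i 1)" 0 t] by simp
qed

lemma cont_meas: "continuous_on UNIV (F::real^'n::finite \<Rightarrow> real) \<Longrightarrow> F \<in> borel_measurable lborel"
  using borel_measurable_continuous_onI by simp

lemma integrable_cs:
  fixes F :: "real^'n::finite \<Rightarrow> real"
  assumes "continuous_on UNIV F" "compact K" "\<forall>x. x \<notin> K \<longrightarrow> F x = 0"
  shows "integrable lborel F"
proof -
  obtain B where B: "\<forall>y\<in>F ` K. norm y \<le> B"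
    using compact_imp_bounded[OF compact_continuous_image[OF continuous_on_subset[OF assms(1)] assms(2)]]
    unfolding bounded_iff by auto
  have Kb: "K \<in> sets lborel" using assms(2) by (simp add: compact_imp_closed)
  have "integrable lborel (\<lambda>x. B * indicator K x)"
    using Kb emeasure_compact_finite[OF assms(2)] by (intro integrable_mult_right integrable_indicator) auto
  then show ?thesis
  proof (rule Bochner_Integration.integrable_bound)
    show "F \<in> borel_measurable lborel" using cont_meas[OF assms(1)] .
    show "AE x in lborel. norm (F x) \<le> norm (B * indicator K x)"
    proof (intro AE_I2)
      fix x show "norm (F x) \<le> norm (B * indicator K x)"
      proof (cases "x \<in> K")
        case True
        then have "norm (F x) \<le> B" using B by auto
        then show ?thesis using True by auto
      qed (use assms(3) in auto)
    qed
  qed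
qed

lemma lborel_translate:
  fixes F :: "real^'n::finite \<Rightarrow> real"
  assumes "F \<in> borel_measurable lborel"
  shows "integral\<^sup>L lborel (\<lambda>x. F (t + x)) = integral\<^sup>L lborel F"
proof -
  have "integral\<^sup>L lborel F = integral\<^sup>L (density (distr lborel borel (\<lambda>x. t + 1 *\<^sub>R x)) (\<lambda>_. \<bar>1::real\<bar>^DIM(real^'n))) F"
    using lborel_affine[where 'a="real^'n", of "1::real" t] by simp
  also have "\<dots> = integral\<^sup>L (distr lborel borel (\<lambda>x. t + x)) F"
    by (simp add: density_1)
  also have "\<dots> = integral\<^sup>L lborel (\<lambda>x. F (t + x))"
    using assms by (subst integral_distr) auto
  finally show ?thesis by simp
qed

lemma lborel_scale:
  fixes F :: "real^'n::finite \<Rightarrow> real"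
  assumes "F \<in> borel_measurable lborel" "c > 0"
  shows "integral\<^sup>L lborel F = c ^ CARD('n) * integral\<^sup>L lborel (\<lambda>x. F (c *\<^sub>R x))"
proof -
  have "integral\<^sup>L lborel F = integral\<^sup>L (density (distr lborel borel (\<lambda>x. 0 + c *\<^sub>R x)) (\<lambda>_. \<bar>c\<bar>^DIM(real^'n))) F"
    using lborel_affine[where 'a="real^'n", of c 0] assms by simp
  also have "\<dots> = c ^ CARD('n) * integral\<^sup>L lborel (\<lambda>x. F (c *\<^sub>R x))"
    using assms by (simp add: integral_density integral_distr)
  finally show ?thesis .
qed



lemma ibp_zero:
  fixes P P' :: "real^'n::finite \<Rightarrow> real"
  assumes dP: "dd P i P'" and cP: "continuous_on UNIV P" and cP': "continuous_on UNIV P'"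
    and K: "compact K" and van: "\<forall>x. x \<notin> K \<longrightarrow> P x = 0 \<and> P' x = 0"
  shows "integral\<^sup>L lborel P' = 0"
proof -
  define e :: "real^'n" where "e = axis i 1"
  obtain B0 where B0: "\<forall>y\<in>P' ` K. norm y \<le> B0"
    using compact_imp_bounded[OF compact_continuous_image[OF continuous_on_subset[OF cP'] K]]
    unfolding bounded_iff by auto
  define B where "B = max B0 0"
  have B: "\<forall>y\<in>P' ` K. norm y \<le> B" and B_nn: "0 \<le> B" using B0 unfolding B_def by force+
  have Bx: "\<bar>P' x\<bar> \<le> B" for x
  proof (cases "x \<in> K")
    case True then show ?thesis using B by auto
  next
    case False then show ?thesis using van B_nn by auto
  qed
  define K' where "K' = (\<lambda>p. fst p - snd p *\<^sub>R e) ` (K \<times> {-1..1::real})"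
  have K': "compact K'" unfolding K'_def
    by (intro compact_continuous_image compact_Times K compact_Icc continuous_intros)
  have K'b: "K' \<in> sets lborel" using K' by (simp add: compact_imp_closed)
  define s :: "nat \<Rightarrow> real" where "s k = 1 / Suc k" for k
  have s_pos: "0 < s k" and s_le: "s k \<le> 1" for k by (auto simp: s_def)
  define Q where "Q k x = (P (x + s k *\<^sub>R e) - P x) / s k" for k x
  have intP: "integrable lborel P"
    using integrable_cs[OF cP K] van by auto
  have mP: "P \<in> borel_measurable lborel" using cont_meas[OF cP] .
  have mP': "P' \<in> borel_measurable lborel" using cont_meas[OF cP'] .
  have intPs: "integrable lborel (\<lambda>x. P (s k *\<^sub>R e + x))" for k
  proof -
    have "integrable (density (distr lborel borel (\<lambda>x. s k *\<^sub>R e + 1 *\<^sub>R x)) (\<lambda>_. \<bar>1::real\<bar>^DIM(real^'n))) P"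
      using lborel_affine[where 'a="real^'n", of "1::real" "s k *\<^sub>R e"] intP by simp
    then have "integrable (distr lborel borel (\<lambda>x. s k *\<^sub>R e + x)) P" by (simp add: density_1)
    then show ?thesis using mP by (subst (asm) integrable_distr_eq) auto
  qed
  have mQ: "Q k \<in> borel_measurable lborel" for k
  proof -
    have "continuous_on UNIV (Q k)" unfolding Q_def
      by (intro continuous_intros continuous_on_compose2[OF cP]) (auto simp: s_def)
    then show ?thesis by (rule cont_meas)
  qed
  have intQ: "integral\<^sup>L lborel (Q k) = 0" for k
  proof -
    have "integral\<^sup>L lborel (Q k) = (integral\<^sup>L lborel (\<lambda>x. P (s k *\<^sub>R e + x)) - integral\<^sup>L lborel P) / s k"
      unfolding Q_def using intPs intP by (simp add: add.commute)
    also have "\<dots> = 0" using lborel_translate[OF mP, of "s k *\<^sub>R e"] by simp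
    finally show ?thesis .
  qed
  have lim: "(\<lambda>k. Q k x) \<longlonglongrightarrow> P' x" for x
  proof -
    have d: "((\<lambda>h. (P (x + h *\<^sub>R e) - P (x + 0 *\<^sub>R e)) / h) \<longlongrightarrow> P' x) (at 0)"
      using dP unfolding dd_def e_def DERIV_def by (auto simp: algebra_simps)
    have "filterlim s (at 0) sequentially"
    proof (rule filterlim_atI)
      show "s \<longlonglongrightarrow> 0" unfolding s_def using LIMSEQ_Suc[OF lim_const_over_n[of 1]] by simp
      show "\<forall>\<^sub>F k in sequentially. s k \<noteq> 0" using s_pos by (simp add: less_imp_neq[symmetric])
    qed
    from filterlim_compose[OF d this] show ?thesis unfolding Q_def by simp
  qed
  have bound: "norm (Q k x) \<le> B * indicator K' x" for k x
  proof (cases "x \<in> K'")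
    case True
    have "\<exists>z. 0 < z \<and> z < s k \<and> P (x + s k *\<^sub>R e) - P (x + 0 *\<^sub>R e) = (s k - 0) * P' (x + z *\<^sub>R e)"
      by (rule MVT2[OF s_pos]) (use dd_at[OF dP] in \<open>auto simp: e_def\<close>)
    then obtain z where "Q k x = P' (x + z *\<^sub>R e)" unfolding Q_def using s_pos[of k] by auto
    then show ?thesis using Bx True by auto
  next
    case False
    have "P (x + t *\<^sub>R e) = 0" if "t \<in> {-1..1}" for t
    proof -
      have "x + t *\<^sub>R e \<notin> K"
      proof
        assume "x + t *\<^sub>R e \<in> K"
        then have "(x + t *\<^sub>R e, t) \<in> K \<times> {-1..1}" using that by auto
        then have "x \<in> K'" unfolding K'_def by (force intro: image_eqI)
        then show False using False by simp
      qed
      then show ?thesis using van by auto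
    qed
    from this[of "s k"] this[of 0] s_le[of k] s_pos[of k] show ?thesis
      unfolding Q_def using False by auto
  qed
  have intB: "integrable lborel (\<lambda>x. B * indicator K' x)"
    using K'b emeasure_compact_finite[OF K'] by (intro integrable_mult_right integrable_indicator) auto
  have "(\<lambda>k. integral\<^sup>L lborel (Q k)) \<longlonglongrightarrow> integral\<^sup>L lborel P'"
    by (rule integral_dominated_convergence[OF mP' mQ intB]) (use lim bound in auto)
  then have "(\<lambda>k. 0::real) \<longlonglongrightarrow> integral\<^sup>L lborel P'" using intQ by simp
  then show ?thesis using LIMSEQ_unique tendsto_const by metis
qed



lemma cont_meas_leb: "continuous_on UNIV (F::real^'n::finite \<Rightarrow> real) \<Longrightarrow> F \<in> borel_measurable lebesgue"
  by (rule measurable_completion, rule cont_meas)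

lemma leb_integral: "continuous_on UNIV (F::real^'n::finite \<Rightarrow> real) \<Longrightarrow>
   integral\<^sup>L lebesgue F = integral\<^sup>L lborel F"
  by (rule integral_completion, rule cont_meas)

lemma leb_integrable: "continuous_on UNIV (F::real^'n::finite \<Rightarrow> real) \<Longrightarrow>
   integrable lebesgue F = integrable lborel F"
  by (rule integrable_completion, rule cont_meas)

lemma ibp:
  fixes F F' V V' :: "real^'n::finite \<Rightarrow> real"
  assumes dF: "dd F i F'" and dV: "dd V i V'"
    and c: "continuous_on UNIV F" "continuous_on UNIV F'" "continuous_on UNIV V" "continuous_on UNIV V'"
    and K: "compact K" and van: "\<forall>x. x \<notin> K \<longrightarrow> V x = 0 \<and> V' x = 0"
  shows "integral\<^sup>L lebesgue (\<lambda>x. F x * V' x) = - integral\<^sup>L lebesgue (\<lambda>x. F' x * V x)"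
proof -
  have dP: "dd (\<lambda>x. F x * V x) i (\<lambda>x. F' x * V x + F x * V' x)"
    unfolding dd_def
  proof
    fix x
    show "((\<lambda>s. F (x + s *\<^sub>R axis i 1) * V (x + s *\<^sub>R axis i 1)) has_field_derivative F' x * V x + F x * V' x) (at 0)"
      using DERIV_mult'[OF dF[unfolded dd_def, rule_format, of x] dV[unfolded dd_def, rule_format, of x]]
      by (simp add: algebra_simps)
  qed
  have c1: "continuous_on UNIV (\<lambda>x. F x * V' x)" and c2: "continuous_on UNIV (\<lambda>x. F' x * V x)"
    using c by (auto intro!: continuous_intros)
  have i1: "integrable lborel (\<lambda>x. F x * V' x)" using integrable_cs[OF c1 K] van by auto
  have i2: "integrable lborel (\<lambda>x. F' x * V x)" using integrable_cs[OF c2 K] van by auto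
  have "integral\<^sup>L lborel (\<lambda>x. F' x * V x + F x * V' x) = 0"
    by (rule ibp_zero[OF dP _ _ K]) (use c van in \<open>auto intro!: continuous_intros\<close>)
  then have "integral\<^sup>L lborel (\<lambda>x. F' x * V x) + integral\<^sup>L lborel (\<lambda>x. F x * V' x) = 0"
    using i1 i2 by simp
  then show ?thesis using leb_integral[OF c1] leb_integral[OF c2] by simp
qed



lemma diff_dd:
  fixes F :: "real^'n::finite \<Rightarrow> real"
  assumes "\<forall>x. F differentiable (at x)"
  shows "dd F i (partial i F)"
  unfolding dd_def
proof
  fix x
  let ?D = "frechet_derivative F (at x)"
  have d: "(F has_derivative ?D) (at x)" using assms frechet_derivative_works by blast
  have bl: "bounded_linear ?D" using has_derivative_bounded_linear[OF d] .
  have l: "((\<lambda>s::real. x + s *\<^sub>R axis i 1) has_derivative (\<lambda>s. s *\<^sub>R axis i 1)) (at 0)"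
    by (auto intro!: derivative_eq_intros)
  have d2: "(F has_derivative ?D) (at (x + 0 *\<^sub>R axis i 1))" using d by simp
  have "((\<lambda>s. F (x + s *\<^sub>R axis i 1)) has_derivative (\<lambda>s. ?D (s *\<^sub>R axis i 1))) (at 0)"
    using diff_chain_at[OF l d2] by (simp add: o_def)
  moreover have "(\<lambda>s. ?D (s *\<^sub>R axis i 1)) = (\<lambda>s. partial i F x * s)"
  proof
    fix s :: real
    show "?D (s *\<^sub>R axis i 1) = partial i F x * s"
      using linear_scale[OF bounded_linear.linear[OF bl], of s "axis i 1"] unfolding partial_def by simp
  qed
  ultimately show "((\<lambda>s. F (x + s *\<^sub>R axis i 1)) has_field_derivative partial i F x) (at 0)"
    unfolding has_field_derivative_def by simp
qed

lemma partial_zero: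
  fixes F :: "real^'n::finite \<Rightarrow> real"
  assumes "open U" "x \<in> U" "\<forall>y\<in>U. F y = 0"
  shows "partial i F x = 0"
proof -
  have "((\<lambda>_. 0) has_derivative (\<lambda>_. 0)) (at x)" by simp
  then have "(F has_derivative (\<lambda>_. 0)) (at x)"
    by (rule has_derivative_transform_within_open[OF _ assms(1,2)]) (use assms(3) in auto)
  then have "frechet_derivative F (at x) = (\<lambda>_. 0)" using frechet_derivative_at by metis
  then show ?thesis unfolding partial_def by simp
qed

lemma diff_cont: "\<forall>x. F differentiable (at x) \<Longrightarrow> continuous_on UNIV (F::real^'n::finite \<Rightarrow> real)"
  by (simp add: continuous_at_imp_continuous_on differentiable_imp_continuous_within)

lemma test_facts:
  fixes \<phi> :: "real^'n::finite \<Rightarrow> real"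
  assumes "test_fun \<phi>"
  defines "K \<equiv> closure {x. \<phi> x \<noteq> 0}"
  shows "compact K" "continuous_on UNIV \<phi>" "continuous_on UNIV (partial i \<phi>)"
    "continuous_on UNIV (partial i (partial j \<phi>))"
    "dd \<phi> i (partial i \<phi>)" "dd (partial j \<phi>) i (partial i (partial j \<phi>))"
    "\<forall>x. x \<notin> K \<longrightarrow> \<phi> x = 0 \<and> partial i \<phi> x = 0"
    "\<forall>x. x \<notin> K \<longrightarrow> partial j \<phi> x = 0 \<and> partial i (partial j \<phi>) x = 0"
proof -
  have sm: "\<And>is x. (foldr partial is \<phi>) differentiable (at x)"
    using assms(1) unfolding test_fun_def smooth_fun_def by blast
  have d0: "\<forall>x. \<phi> differentiable (at x)" using sm[of "[]"] by simp
  have d1: "\<forall>x. (partial k \<phi>) differentiable (at x)" for k using sm[of "[k]"] by simp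
  have d2: "\<forall>x. (partial i (partial j \<phi>)) differentiable (at x)" using sm[of "[i,j]"] by simp
  show "compact K" using assms(1) unfolding test_fun_def K_def by blast
  show "continuous_on UNIV \<phi>" using diff_cont[OF d0] .
  show "continuous_on UNIV (partial i \<phi>)" using diff_cont[OF d1] .
  show "continuous_on UNIV (partial i (partial j \<phi>))" using diff_cont[OF d2] .
  show "dd \<phi> i (partial i \<phi>)" using diff_dd[OF d0] .
  show "dd (partial j \<phi>) i (partial i (partial j \<phi>))" using diff_dd[OF d1] .
  let ?U = "- K"
  have oU: "open ?U" unfolding K_def by (simp add: open_Compl)
  have z0: "\<forall>y\<in>?U. \<phi> y = 0" 
    proof
      fix y assume "y \<in> ?U"
      moreover have "{x. \<phi> x \<noteq> 0} \<subseteq> K" unfolding K_def by (rule closure_subset)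
      ultimately have "y \<notin> {x. \<phi> x \<noteq> 0}" by (auto simp del: Collect_neg_eq)
      then show "\<phi> y = 0" by simp
    qed
    have z1: "\<forall>y\<in>?U. partial k \<phi> y = 0" for k
    proof
      fix y assume "y \<in> ?U" then show "partial k \<phi> y = 0" by (rule partial_zero[OF oU _ z0])
    qed
    have z2: "\<forall>y\<in>?U. partial i (partial j \<phi>) y = 0" 
    proof
      fix y assume "y \<in> ?U" then show "partial i (partial j \<phi>) y = 0" by (rule partial_zero[OF oU _ z1])
    qed
  show "\<forall>x. x \<notin> K \<longrightarrow> \<phi> x = 0 \<and> partial i \<phi> x = 0" using z0 z1 by simp
  show "\<forall>x. x \<notin> K \<longrightarrow> partial j \<phi> x = 0 \<and> partial i (partial j \<phi>) x = 0" using z1 z2 by simp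
qed

lemma weak_from_dd:
  fixes u :: "real^'n::finite \<Rightarrow> real"
  assumes cu: "continuous_on UNIV u" and cG: "continuous_on UNIV G" and cH: "continuous_on UNIV H"
    and du: "dd u i G" and dG: "dd G j H"
  shows "weak_partial u i G" "weak_partial2 u i j H"
proof -
  show "weak_partial u i G" unfolding weak_partial_def
  proof (intro allI impI)
    fix \<phi> :: "real^'n \<Rightarrow> real" assume t: "test_fun \<phi>"
    show "integral\<^sup>L lebesgue (\<lambda>x. u x * partial i \<phi> x) = - integral\<^sup>L lebesgue (\<lambda>x. G x * \<phi> x)"
      by (rule ibp[OF du test_facts(5)[OF t] cu cG test_facts(2,3)[OF t] test_facts(1)[OF t]])
         (rule test_facts(7)[OF t])
  qed
  show "weak_partial2 u i j H" unfolding weak_partial2_def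
  proof (intro allI impI)
    fix \<phi> :: "real^'n \<Rightarrow> real" assume t: "test_fun \<phi>"
    have "integral\<^sup>L lebesgue (\<lambda>x. u x * partial i (partial j \<phi>) x) = - integral\<^sup>L lebesgue (\<lambda>x. G x * partial j \<phi> x)"
      by (rule ibp[OF du test_facts(6)[OF t] cu cG test_facts(3)[OF t] test_facts(4)[OF t] test_facts(1)[OF t]])
         (rule test_facts(8)[OF t])
    also have "integral\<^sup>L lebesgue (\<lambda>x. G x * partial j \<phi> x) = - integral\<^sup>L lebesgue (\<lambda>x. H x * \<phi> x)"
      by (rule ibp[OF dG test_facts(5)[OF t] cG cH test_facts(2,3)[OF t] test_facts(1)[OF t]])
         (rule test_facts(7)[OF t])
    finally show "integral\<^sup>L lebesgue (\<lambda>x. u x * partial i (partial j \<phi>) x) = integral\<^sup>L lebesgue (\<lambda>x. H x * \<phi> x)"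
      by simp
  qed
qed



definition hh :: "real \<Rightarrow> real" where "hh r = max 0 (1 - r)"

lemma hk_deriv:
  fixes k :: nat assumes k: "k \<ge> 2"
  shows "((\<lambda>r. hh r ^ k) has_real_derivative (- (real k * hh r ^ (k - 1)))) (at r)"
proof (cases "r < 1")
  case True
  have d: "((\<lambda>r. (1 - r) ^ k) has_real_derivative (- (real k * (1 - r) ^ (k - 1)))) (at r)"
    by (auto intro!: derivative_eq_intros)
  show ?thesis
    by (rule has_field_derivative_transform_within_open[of _ _ _ "{..<1}"])
       (use d True in \<open>auto simp: hh_def\<close>)
next
  case False
  show ?thesis
  proof (cases "r > 1")
    case True
    have d: "((\<lambda>r. 0) has_real_derivative 0) (at r)" by simp
    have d0: "((\<lambda>r. hh r ^ k) has_real_derivative 0) (at r)"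
      by (rule has_field_derivative_transform_within_open[OF d, of "{1<..}"])
         (use True k in \<open>auto simp: hh_def\<close>)
    have e: "- (real k * hh r ^ (k - 1)) = 0" using k True by (simp add: hh_def)
    show ?thesis unfolding e by (rule d0)
  next
    case False
    then have r: "r = 1" using \<open>\<not> r < 1\<close> by simp
    have "((\<lambda>t. (hh (r + t) ^ k - hh r ^ k) / t) \<longlongrightarrow> 0) (at 0)"
    proof (rule Lim_null_comparison)
      show "((\<lambda>t. \<bar>t\<bar>) \<longlongrightarrow> 0) (at (0::real))"
        using tendsto_rabs[OF tendsto_ident_at[of "0::real" UNIV]] by simp
      show "\<forall>\<^sub>F t in at 0. norm ((hh (r + t) ^ k - hh r ^ k) / t) \<le> \<bar>t\<bar>"
      proof -
        have "\<forall>\<^sub>F t in at (0::real). \<bar>t\<bar> < 1"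
          unfolding eventually_at by (rule exI[of _ 1]) (auto simp: dist_real_def)
        then show ?thesis
        proof eventually_elim
          case (elim t)
          have h0: "hh r = 0" using r by (simp add: hh_def)
          have ht: "0 \<le> hh (r + t)" "hh (r + t) \<le> \<bar>t\<bar>" using r by (auto simp: hh_def)
          have "hh (r + t) ^ k \<le> \<bar>t\<bar> ^ k" using ht by (intro power_mono) auto
          also have "\<dots> = \<bar>t\<bar>^2 * \<bar>t\<bar> ^ (k - 2)" using k by (metis le_add_diff_inverse power2_abs power_add)
          also have "\<dots> \<le> \<bar>t\<bar>^2 * 1"
            using elim by (intro mult_left_mono power_le_one) auto
          finally have "hh (r + t) ^ k \<le> \<bar>t\<bar>^2" by simp
          moreover have "0 \<le> hh (r + t) ^ k" using ht by simp
          moreover have hk0: "hh r ^ k = 0" using k h0 by simp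
          ultimately have "\<bar>hh (r + t) ^ k - hh r ^ k\<bar> \<le> \<bar>t\<bar> * \<bar>t\<bar>"
            by (simp only: diff_zero abs_of_nonneg power2_eq_square abs_mult_self_eq)
          then show ?case
            by (cases "t = 0") (auto simp: abs_divide divide_le_eq)
        qed
      qed
    qed
    moreover have e: "- (real k * hh r ^ (k - 1)) = 0" using k r by (simp add: hh_def)
    ultimately show ?thesis unfolding DERIV_def e by simp
  qed
qed

definition g0 :: "real \<Rightarrow> real" where "g0 r = hh r ^ 3"
definition g1 :: "real \<Rightarrow> real" where "g1 r = - 3 * hh r ^ 2"
definition g2 :: "real \<Rightarrow> real" where "g2 r = 6 * hh r"

lemma g0_deriv: "(g0 has_real_derivative g1 r) (at r)"
  using hk_deriv[of 3 r] unfolding g0_def g1_def by (simp add: numeral_eq_Suc)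

lemma g1_deriv: "(g1 has_real_derivative g2 r) (at r)"
proof -
  have "((\<lambda>r. -3 * hh r ^ 2) has_real_derivative -3 * (- (real 2 * hh r ^ (2 - 1)))) (at r)"
    by (intro DERIV_cmult hk_deriv) auto
  then show ?thesis unfolding g1_def g2_def by (simp add: fun_eq_iff)
qed

lemma hh_cont: "continuous_on UNIV hh"
  unfolding hh_def by (intro continuous_intros)

lemma g_cont: "continuous_on UNIV g0" "continuous_on UNIV g1" "continuous_on UNIV g2"
  unfolding g0_def g1_def g2_def by (auto intro!: continuous_intros continuous_on_compose2[OF hh_cont])



definition w0 :: "real^'n::finite \<Rightarrow> real" where "w0 x = g0 (x \<bullet> x)"
definition G0 :: "'n::finite \<Rightarrow> real^'n \<Rightarrow> real" where "G0 i x = g1 (x \<bullet> x) * (2 * x$i)"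
definition H0 :: "'n::finite \<Rightarrow> 'n \<Rightarrow> real^'n \<Rightarrow> real" where
  "H0 i j x = g2 (x \<bullet> x) * (2 * x$j) * (2 * x$i) + g1 (x \<bullet> x) * (2 * (if i = j then 1 else 0))"

lemma line_sq: "(x + s *\<^sub>R axis i 1) \<bullet> (x + s *\<^sub>R axis i 1) = x \<bullet> x + 2 * s * x$i + s^2"
  by (simp add: inner_add_left inner_add_right inner_axis inner_axis_axis inner_commute[of "axis i 1" x]
      algebra_simps power2_eq_square)

lemma line_nth: "(x + s *\<^sub>R axis i 1) $ j = x $ j + s * (if i = j then 1 else 0)"
  by (simp add: axis_def)

lemma dQ: "((\<lambda>s. x \<bullet> x + 2 * s * x$i + s^2) has_real_derivative 2 * x$i) (at 0)"
  by (auto intro!: derivative_eq_intros)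

lemma dd_w0: "dd w0 i (G0 i)"
  unfolding dd_def
proof
  fix x :: "real^'a"
  have "((\<lambda>s. g0 (x \<bullet> x + 2 * s * x$i + s^2)) has_real_derivative g1 (x \<bullet> x + 2 * 0 * x$i + 0^2) * (2 * x$i)) (at 0)"
    by (rule DERIV_chain2[OF g0_deriv dQ])
  then show "((\<lambda>s. w0 (x + s *\<^sub>R axis i 1)) has_real_derivative G0 i x) (at 0)"
    unfolding w0_def G0_def line_sq by simp
qed

lemma dd_G0: "dd (G0 i) j (H0 i j)"
  unfolding dd_def
proof
  fix x :: "real^'a"
  have d1: "((\<lambda>s. g1 (x \<bullet> x + 2 * s * x$j + s^2)) has_real_derivative g2 (x \<bullet> x + 2 * 0 * x$j + 0^2) * (2 * x$j)) (at 0)"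
    by (rule DERIV_chain2[OF g1_deriv dQ])
  have d2: "((\<lambda>s. 2 * (x $ i + s * (if j = i then 1 else 0))) has_real_derivative 2 * (if j = i then 1 else 0)) (at 0)"
    by (auto intro!: derivative_eq_intros)
  have "((\<lambda>s. g1 (x \<bullet> x + 2 * s * x$j + s^2) * (2 * (x $ i + s * (if j = i then 1 else 0)))) has_real_derivative
      g2 (x \<bullet> x + 2 * 0 * x$j + 0^2) * (2 * x$j) * (2 * (x $ i + 0 * (if j = i then 1 else 0)))
      + g1 (x \<bullet> x + 2 * 0 * x$j + 0^2) * (2 * (if j = i then 1 else 0))) (at 0)"
    using DERIV_mult'[OF d1 d2] by (simp add: algebra_simps)
  then show "((\<lambda>s. G0 i (x + s *\<^sub>R axis j 1)) has_real_derivative H0 i j x) (at 0)"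
    unfolding G0_def H0_def line_sq line_nth by (simp add: eq_commute[of i j])
qed

lemma cont_w0: "continuous_on UNIV w0" "continuous_on UNIV (G0 i)" "continuous_on UNIV (H0 i j)"
  unfolding w0_def G0_def H0_def
  by (auto intro!: continuous_intros continuous_on_compose2[OF g_cont(1)]
      continuous_on_compose2[OF g_cont(2)] continuous_on_compose2[OF g_cont(3)])

lemma supp_w0:
  assumes "x \<notin> cball 0 1"
  shows "w0 x = 0" "G0 i x = 0" "H0 i j x = 0"
proof -
  have "norm x > 1" using assms by auto
  then have "x \<bullet> x > 1" by (metis norm_eq_sqrt_inner real_sqrt_gt_1_iff)
  then have "hh (x \<bullet> x) = 0" by (simp add: hh_def)
  then show "w0 x = 0" "G0 i x = 0" "H0 i j x = 0" by (auto simp: w0_def G0_def H0_def g0_def g1_def g2_def)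
qed

lemma w0_bounds: "0 \<le> w0 x" "w0 x \<le> 1"
proof -
  have "0 \<le> x \<bullet> x" by simp
  then have "0 \<le> hh (x \<bullet> x)" "hh (x \<bullet> x) \<le> 1" by (auto simp: hh_def)
  then show "0 \<le> w0 x" "w0 x \<le> 1" unfolding w0_def g0_def by (auto intro: power_le_one)
qed

lemma w0_zero: "w0 0 = 1" by (simp add: w0_def g0_def hh_def)



lemma dd_scale:
  fixes F F' :: "real^'n::finite \<Rightarrow> real"
  assumes d: "dd F i F'" and lam: "lam > 0"
  shows "dd (\<lambda>x. F ((1/lam) *\<^sub>R x)) i (\<lambda>x. F' ((1/lam) *\<^sub>R x) / lam)"
  unfolding dd_def
proof
  fix x :: "real^'n"
  let ?y = "(1/lam) *\<^sub>R x"
  have d1: "((\<lambda>t. F (?y + t *\<^sub>R axis i 1)) has_real_derivative F' ?y) (at ((\<lambda>s. s / lam) 0))"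
    using d unfolding dd_def by simp
  have d2: "((\<lambda>s. s / lam) has_real_derivative 1 / lam) (at 0)"
    using lam by (auto intro!: derivative_eq_intros)
  have "((\<lambda>s. F (?y + (s / lam) *\<^sub>R axis i 1)) has_real_derivative F' ?y * (1 / lam)) (at 0)"
    using DERIV_chain2[OF d1 d2] by simp
  moreover have "(\<lambda>s. F (?y + (s / lam) *\<^sub>R axis i 1)) = (\<lambda>s. F ((1/lam) *\<^sub>R (x + s *\<^sub>R axis i 1)))"
    by (simp add: scaleR_add_right)
  ultimately show "((\<lambda>s. F ((1/lam) *\<^sub>R (x + s *\<^sub>R axis i 1))) has_real_derivative F' ?y / lam) (at 0)"
    by simp
qed

lemma integral_pos:
  fixes F :: "real^'n::finite \<Rightarrow> real"
  assumes c: "continuous_on UNIV F" and nn: "\<And>x. 0 \<le> F x" and pos: "F x0 > 0"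
    and int: "integrable lborel F"
  shows "integral\<^sup>L lborel F > 0"
proof -
  obtain r where r: "r > 0" "\<And>y. dist y x0 < r \<Longrightarrow> dist (F y) (F x0) < F x0 / 2"
    using c pos unfolding continuous_on_iff by (metis UNIV_I half_gt_zero)
  have b: "F x0 / 2 * indicator (ball x0 r) y \<le> F y" for y
  proof (cases "y \<in> ball x0 r")
    case True
    then have "dist y x0 < r" by (simp add: dist_commute)
    then have "dist (F y) (F x0) < F x0 / 2" using r(2) by blast
    then have "F x0 / 2 \<le> F y" unfolding dist_real_def by arith
    then show ?thesis using True by simp
  qed (use nn in auto)
  have ib: "integrable lborel (\<lambda>y. F x0 / 2 * indicator (ball x0 r) y)"
  proof -
    have "integrable lborel (indicat_real (ball x0 r))"
      by (rule integrable_real_indicator) (use emeasure_lborel_ball_finite[of x0 r] in auto)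
    then show ?thesis by (rule integrable_mult_right)
  qed
  have "0 < measure lborel (ball x0 r)" using r(1) by simp
  then have "0 < F x0 / 2 * measure lborel (ball x0 r)" using pos by simp
  also have "\<dots> = integral\<^sup>L lborel (\<lambda>y. F x0 / 2 * indicator (ball x0 r) y)" by simp
  also have "\<dots> \<le> integral\<^sup>L lborel F" by (rule integral_mono[OF ib int b])
  finally show ?thesis .
qed

lemma scale_int:
  fixes F :: "real^'n::finite \<Rightarrow> real"
  assumes c: "continuous_on UNIV F" and lam: "lam > 0"
  shows "integral\<^sup>L lborel (\<lambda>x. F ((1/lam) *\<^sub>R x)) = lam ^ CARD('n) * integral\<^sup>L lborel F"
proof -
  have c2: "continuous_on UNIV (\<lambda>x. F ((1/lam) *\<^sub>R x))"
    by (intro continuous_on_compose2[OF c] continuous_intros) auto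
  have "integral\<^sup>L lborel (\<lambda>x. F ((1/lam) *\<^sub>R x)) = lam ^ CARD('n) * integral\<^sup>L lborel (\<lambda>x. F ((1/lam) *\<^sub>R (lam *\<^sub>R x)))"
    by (rule lborel_scale[OF cont_meas[OF c2] lam])
  then show ?thesis using lam by simp
qed

lemma integrable_scale:
  fixes F :: "real^'n::finite \<Rightarrow> real"
  assumes "continuous_on UNIV F" "lam > 0" "\<forall>x. x \<notin> cball 0 1 \<longrightarrow> F x = 0"
  shows "integrable lborel (\<lambda>x. F ((1/lam) *\<^sub>R x))"
proof (rule integrable_cs[of _ "cball 0 lam"])
  show "continuous_on UNIV (\<lambda>x. F ((1/lam) *\<^sub>R x))"
    by (intro continuous_on_compose2[OF assms(1)] continuous_intros) auto
  show "\<forall>x. x \<notin> cball 0 lam \<longrightarrow> F ((1/lam) *\<^sub>R x) = 0"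
  proof (intro allI impI)
    fix x :: "real^'n" assume "x \<notin> cball 0 lam"
    then have "norm x > lam" by auto
    then have "norm ((1/lam) *\<^sub>R x) > 1" using assms(2) by (simp add: field_simps)
    then show "F ((1/lam) *\<^sub>R x) = 0" using assms(3) by auto
  qed
qed simp



lemma f_lip:
  fixes f :: "real \<Rightarrow> real"
  assumes lip: "\<forall>u v. \<bar>f u - f v\<bar> \<le> C1 * (\<bar>u\<bar> + \<bar>v\<bar>) powr (p - 1) * \<bar>u - v\<bar>"
    and C1: "C1 > 0" and p: "p \<ge> 1"
    and u: "\<bar>u\<bar> \<le> B" and v: "\<bar>v\<bar> \<le> B"
  shows "\<bar>f u - f v\<bar> \<le> C1 * (2 * B) powr (p - 1) * \<bar>u - v\<bar>"
proof -
  have "(\<bar>u\<bar> + \<bar>v\<bar>) powr (p - 1) \<le> (2 * B) powr (p - 1)"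
    by (rule powr_mono2) (use p u v in auto)
  then have "C1 * (\<bar>u\<bar> + \<bar>v\<bar>) powr (p - 1) * \<bar>u - v\<bar> \<le> C1 * (2 * B) powr (p - 1) * \<bar>u - v\<bar>"
    using C1 by (intro mult_right_mono mult_left_mono) auto
  then show ?thesis using lip by (meson order_trans)
qed

lemma f_cont:
  fixes f :: "real \<Rightarrow> real"
  assumes lip: "\<forall>u v. \<bar>f u - f v\<bar> \<le> C1 * (\<bar>u\<bar> + \<bar>v\<bar>) powr (p - 1) * \<bar>u - v\<bar>"
    and C1: "C1 > 0" and p: "p \<ge> 1"
  shows "continuous_on UNIV f"
proof (rule continuous_at_imp_continuous_on, intro ballI)
  fix v :: real
  let ?B = "\<bar>v\<bar> + 1"
  have "(C1 * (2 * ?B) powr (p - 1))-lipschitz_on (cball v 1) f"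
  proof (rule lipschitz_onI)
    fix x y assume "x \<in> cball v 1" "y \<in> cball v 1"
    then have "\<bar>x\<bar> \<le> ?B" "\<bar>y\<bar> \<le> ?B" by (auto simp: dist_real_def)
    from f_lip[OF lip C1 p this] show "dist (f x) (f y) \<le> C1 * (2 * ?B) powr (p - 1) * dist x y"
      by (simp add: dist_real_def)
  qed (use C1 in auto)
  then have "continuous_on (cball v 1) f" by (rule lipschitz_on_continuous_on)
  then show "isCont f v"
    using continuous_on_interior[of "cball v 1" f v] by simp
qed

lemma f_neg:
  fixes f :: "real \<Rightarrow> real"
  assumes lim: "Liminf at_bot (\<lambda>u. ereal (f u + u)) > -\<infinity>"
    and bnd: "\<forall>u. \<bar>f u\<bar> \<le> C1 * \<bar>u\<bar> powr q" and C1: "C1 > 0" and q: "q > 1"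
  shows "\<exists>M\<ge>0. \<forall>s\<le>0. f s \<ge> - s - M"
proof -
  obtain r0 where r0: "ereal r0 < Liminf at_bot (\<lambda>u. ereal (f u + u))"
  proof (cases "Liminf at_bot (\<lambda>u. ereal (f u + u))")
    case (real L) then show ?thesis using that[of "L - 1"] by simp
  next
    case PInf then show ?thesis using that[of 0] by simp
  next
    case MInf then show ?thesis using lim by simp
  qed
  have "\<forall>\<^sub>F u in at_bot. ereal r0 < ereal (f u + u)" by (rule less_LiminfD[OF r0])
  then obtain N where N: "\<And>u. u \<le> N \<Longrightarrow> r0 < f u + u" by (auto simp: eventually_at_bot_linorder)
  define M where "M = max 0 (max (- r0) (C1 * \<bar>N\<bar> powr q + \<bar>N\<bar>))"
  have "\<forall>s\<le>0. f s \<ge> - s - M"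
  proof (intro allI impI)
    fix s :: real assume s: "s \<le> 0"
    show "f s \<ge> - s - M"
    proof (cases "s \<le> N")
      case True
      then show ?thesis using N[OF True] unfolding M_def by linarith
    next
      case False
      then have "\<bar>s\<bar> \<le> \<bar>N\<bar>" using s by auto
      then have "\<bar>s\<bar> powr q \<le> \<bar>N\<bar> powr q" by (intro powr_mono2) (use q in auto)
      then have "\<bar>f s\<bar> \<le> C1 * \<bar>N\<bar> powr q" using bnd C1 by (meson mult_left_mono less_le order_trans)
      then show ?thesis using s \<open>\<bar>s\<bar> \<le> \<bar>N\<bar>\<close> unfolding M_def by linarith
    qed
  qed
  then show ?thesis unfolding M_def by (intro exI[of _ M]) (auto simp: M_def)
qed



lemma G0_sum: "(\<Sum>i\<in>UNIV. c$i * G0 i x) = (g1 (x \<bullet> x) * 2) * (c \<bullet> x)"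
proof -
  have "(\<Sum>i\<in>UNIV. c$i * G0 i x) = (\<Sum>i\<in>UNIV. (g1 (x \<bullet> x) * 2) * (c$i * x$i))"
    unfolding G0_def by (rule sum.cong) (simp_all add: algebra_simps)
  also have "\<dots> = (g1 (x \<bullet> x) * 2) * (c \<bullet> x)"
    unfolding inner_vec_def by (simp add: sum_distrib_left)
  finally show ?thesis .
qed

lemma half_c:
  fixes c :: "real^'n::finite"
  assumes "0 < norm c" "norm c < sqrt 2"
  shows "((1/2) *\<^sub>R c) \<bullet> ((1/2) *\<^sub>R c) < 1" "c \<bullet> ((1/2) *\<^sub>R c) > 0"
proof -
  have "norm c ^ 2 < sqrt 2 ^ 2" using assms by (intro power_strict_mono) auto
  then have "norm c ^ 2 < 2" by simp
  then show "((1/2) *\<^sub>R c) \<bullet> ((1/2) *\<^sub>R c) < 1" by (simp add: power2_norm_eq_inner[symmetric] power_divide)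
  show "c \<bullet> ((1/2) *\<^sub>R c) > 0" using assms by simp
qed

lemma int_lin:
  fixes a b d :: "'a \<Rightarrow> real"
  assumes "integrable M a" "integrable M b" "integrable M d"
  shows "integral\<^sup>L M (\<lambda>x. a x / k1 - b x / k2 + d x) = integral\<^sup>L M a / k1 - integral\<^sup>L M b / k2 + integral\<^sup>L M d"
  using assms by simp

lemma NL1:
  fixes f :: "real \<Rightarrow> real"
  assumes C1: "C1 > 0" and q: "q > 1" and bnd: "\<forall>u. \<bar>f u\<bar> \<le> C1 * \<bar>u\<bar> powr q"
    and w: "0 \<le> w" "w \<le> 1"
  shows "\<bar>t * w * f (t * w)\<bar> \<le> C1 * \<bar>t\<bar> powr (q + 1) * w^2"
proof -
  let ?s = "t * w"
  have "\<bar>?s * f ?s\<bar> = \<bar>?s\<bar> * \<bar>f ?s\<bar>" by (simp add: abs_mult)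
  also have "\<dots> \<le> \<bar>?s\<bar> * (C1 * \<bar>?s\<bar> powr q)" using bnd by (intro mult_left_mono) auto
  also have "\<dots> = C1 * \<bar>?s\<bar> powr (q + 1)"
  proof (cases "?s = 0")
    case False
    then have "\<bar>?s\<bar> powr (q + 1) = \<bar>?s\<bar> powr q * \<bar>?s\<bar>" by (simp add: powr_add)
    then show ?thesis by simp
  next
    case True
    then have z: "\<bar>?s\<bar> = 0" by simp
    show ?thesis unfolding z by simp
  qed
  also have "\<bar>?s\<bar> powr (q + 1) = \<bar>t\<bar> powr (q + 1) * w powr (q + 1)"
    using w by (simp add: abs_mult powr_mult)
  also have "w powr (q + 1) \<le> w powr 2" by (rule powr_mono') (use q w in auto)
  also have "w powr 2 = w^2" using w by simp
  finally show ?thesis using C1 by (simp add: mult_left_mono)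
qed

lemma NL2:
  fixes f :: "real \<Rightarrow> real"
  assumes M: "\<And>s. s \<le> 0 \<Longrightarrow> f s \<ge> - s - M" and t: "t \<le> 0" and w: "0 \<le> w"
  shows "t * w * f (t * w) \<le> - (t^2 * w^2) + M * \<bar>t\<bar> * w"
proof -
  let ?s = "t * w"
  have s: "?s \<le> 0" using t w by (simp add: mult_nonpos_nonneg)
  have "?s * f ?s \<le> ?s * (- ?s - M)" using M[OF s] s by (rule mult_left_mono_neg)
  also have "\<dots> = - (t^2 * w^2) + M * \<bar>t\<bar> * w" using t by (simp add: algebra_simps power2_eq_square)
  finally show ?thesis .
qed

lemma NL3:
  fixes f :: "real \<Rightarrow> real"
  assumes lip: "\<forall>u v. \<bar>f u - f v\<bar> \<le> C1 * (\<bar>u\<bar> + \<bar>v\<bar>) powr (p - 1) * \<bar>u - v\<bar>"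
    and C1: "C1 > 0" and p: "p \<ge> 1" and q: "q > 1" and bnd: "\<forall>u. \<bar>f u\<bar> \<le> C1 * \<bar>u\<bar> powr q"
    and w: "0 \<le> w" "w \<le> 1" and t: "\<bar>t\<bar> \<le> T" and t': "\<bar>t'\<bar> \<le> T"
  shows "\<bar>t * w * f (t * w) - t' * w * f (t' * w)\<bar> \<le> (T * (C1 * (2 * T) powr (p - 1)) + C1 * T powr q) * (\<bar>t - t'\<bar> * w)"
proof -
  let ?s = "t * w" and ?s' = "t' * w"
  have ss: "\<bar>?s\<bar> \<le> T" using t w by (simp add: abs_mult mult_le_one) (metis abs_ge_zero mult_right_le_one_le order_trans t)
  have ss': "\<bar>?s'\<bar> \<le> T" using t' w by (simp add: abs_mult) (metis abs_ge_zero mult_right_le_one_le order_trans t')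
  have d: "\<bar>?s - ?s'\<bar> = \<bar>t - t'\<bar> * w" using w by (simp add: abs_mult left_diff_distrib[symmetric])
  have "?s * f ?s - ?s' * f ?s' = ?s * (f ?s - f ?s') + (?s - ?s') * f ?s'" by (simp add: algebra_simps)
  then have "\<bar>?s * f ?s - ?s' * f ?s'\<bar> \<le> \<bar>?s\<bar> * \<bar>f ?s - f ?s'\<bar> + \<bar>?s - ?s'\<bar> * \<bar>f ?s'\<bar>"
    by (simp add: abs_mult[symmetric] abs_triangle_ineq)
  also have "\<bar>?s\<bar> * \<bar>f ?s - f ?s'\<bar> \<le> T * (C1 * (2 * T) powr (p - 1) * \<bar>?s - ?s'\<bar>)"
    by (intro mult_mono f_lip[OF lip C1 p ss ss']) (use ss in auto)
  also have "\<bar>f ?s'\<bar> \<le> C1 * T powr q"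
  proof -
    have "\<bar>?s'\<bar> powr q \<le> T powr q" by (rule powr_mono2) (use q ss' in auto)
    then show ?thesis using bnd C1 by (meson mult_left_mono less_le order_trans)
  qed
  then have "\<bar>?s - ?s'\<bar> * \<bar>f ?s'\<bar> \<le> \<bar>?s - ?s'\<bar> * (C1 * T powr q)" by (intro mult_left_mono) auto
  finally show ?thesis unfolding d by (simp add: algebra_simps)
qed

lemma pc_pt:
  fixes c :: "real^'n::finite"
  assumes "lam \<noteq> 0"
  shows "(\<Sum>i\<in>UNIV. t * (H0 i i y / lam / lam))^2 - (\<Sum>i\<in>UNIV. c$i * (t * (G0 i y / lam)))^2 + (t * w0 y)^2
    = t^2 * ((\<Sum>i\<in>UNIV. H0 i i y)^2 / lam^4 - (\<Sum>i\<in>UNIV. c$i * G0 i y)^2 / lam^2 + (w0 y)^2)"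
proof -
  have 1: "(\<Sum>i\<in>UNIV. t * (H0 i i y / lam / lam)) = (t / lam^2) * (\<Sum>i\<in>UNIV. H0 i i y)"
    by (simp add: sum_distrib_left power2_eq_square)
  have 2: "(\<Sum>i\<in>UNIV. c$i * (t * (G0 i y / lam))) = (t / lam) * (\<Sum>i\<in>UNIV. c$i * G0 i y)"
    by (simp add: sum_distrib_left algebra_simps)
  show ?thesis unfolding 1 2 using assms by (simp add: power_mult_distrib power_divide field_simps)
qed



lemma dd_cmult: assumes "dd F i F'" shows "dd (\<lambda>x. a * F x) i (\<lambda>x. a * F' x)"
  unfolding dd_def
proof
  fix x show "((\<lambda>s. a * F (x + s *\<^sub>R axis i 1)) has_real_derivative a * F' x) (at 0)"
    using assms unfolding dd_def by (intro DERIV_cmult) blast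
qed

lemma dd_div: assumes "dd F i F'" shows "dd (\<lambda>x. F x / a) i (\<lambda>x. F' x / a)"
  unfolding dd_def
proof
  fix x show "((\<lambda>s. F (x + s *\<^sub>R axis i 1) / a) has_real_derivative F' x / a) (at 0)"
    using assms unfolding dd_def by (intro DERIV_cdivide) blast
qed

lemma cont_scale:
  fixes F :: "real^'n::finite \<Rightarrow> real"
  assumes "continuous_on UNIV F" shows "continuous_on UNIV (\<lambda>x. F ((1/lam) *\<^sub>R x))"
proof -
  have "continuous_on UNIV (\<lambda>x::real^'n. (1/lam) *\<^sub>R x)" by (intro continuous_intros)
  from continuous_on_compose2[OF assms this] show ?thesis by simp
qed

theorem lemma2p2:
  fixes f :: "real \<Rightarrow> real" and c :: "real^'n"
  assumes A1_diff: "AE x in lborel. f differentiable (at x)"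
    and A1_liminf: "Liminf at_bot (\<lambda>u. ereal (f u + u)) > -\<infinity>"
    and A2: "\<exists>C1 p q. C1 > 0 \<and> p \<ge> 1 \<and> q > 1
        \<and> (\<forall>u v. \<bar>f u - f v\<bar> \<le> C1 * (\<bar>u\<bar> + \<bar>v\<bar>) powr (p - 1) * \<bar>u - v\<bar>)
        \<and> (\<forall>u. \<bar>f u\<bar> \<le> C1 * \<bar>u\<bar> powr q)
        \<and> (CARD('n) > 4 \<longrightarrow> p < (real CARD('n) + 4) / (real CARD('n) - 4)
                          \<and> q < (real CARD('n) + 4) / (real CARD('n) - 4))"
    and c_pos: "0 < norm c" and c_small: "norm c < sqrt 2"
  shows "\<exists>u G H. H2_with u G H \<and> \<not> (AE x in lebesgue. u x = 0) \<and> Pc c f u G H = 0"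
proof -
  obtain C1 p q where C1: "C1 > 0" and p: "p \<ge> 1" and q: "q > 1"
    and lip: "\<forall>u v. \<bar>f u - f v\<bar> \<le> C1 * (\<bar>u\<bar> + \<bar>v\<bar>) powr (p - 1) * \<bar>u - v\<bar>"
    and bnd: "\<forall>u. \<bar>f u\<bar> \<le> C1 * \<bar>u\<bar> powr q"
    using A2 by blast
  have fc: "continuous_on UNIV f" by (rule f_cont[OF lip C1 p])
  obtain M where M: "M \<ge> 0" "\<And>s. s \<le> 0 \<Longrightarrow> f s \<ge> - s - M"
    using f_neg[OF A1_liminf bnd C1 q] by blast
  let ?n = "CARD('n)"
  let ?B = "cball (0::real^'n) 1"
  define Dq where "Dq = integral\<^sup>L lborel (\<lambda>x::real^'n. (\<Sum>i\<in>UNIV. H0 i i x)^2)"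
  define Eq where "Eq = integral\<^sup>L lborel (\<lambda>x::real^'n. (\<Sum>i\<in>UNIV. c$i * G0 i x)^2)"
  define Wq where "Wq = integral\<^sup>L lborel (\<lambda>x::real^'n. (w0 x)^2)"
  have cD: "continuous_on UNIV (\<lambda>x::real^'n. (\<Sum>i\<in>UNIV. H0 i i x)^2)"
    by (intro continuous_intros cont_w0)
  have cE: "continuous_on UNIV (\<lambda>x::real^'n. (\<Sum>i\<in>UNIV. c$i * G0 i x)^2)"
    by (intro continuous_intros cont_w0)
  have cW: "continuous_on UNIV (\<lambda>x::real^'n. (w0 x)^2)"
    by (intro continuous_intros cont_w0)
  have sD: "\<forall>x::real^'n. x \<notin> ?B \<longrightarrow> (\<Sum>i\<in>UNIV. H0 i i x)^2 = 0" by (simp add: supp_w0)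
  have sE: "\<forall>x::real^'n. x \<notin> ?B \<longrightarrow> (\<Sum>i\<in>UNIV. c$i * G0 i x)^2 = 0" by (simp add: supp_w0)
  have sW: "\<forall>x::real^'n. x \<notin> ?B \<longrightarrow> (w0 x)^2 = 0" by (simp add: supp_w0)
  have iD: "integrable lborel (\<lambda>x::real^'n. (\<Sum>i\<in>UNIV. H0 i i x)^2)" by (rule integrable_cs[OF cD _ sD]) simp
  have iE: "integrable lborel (\<lambda>x::real^'n. (\<Sum>i\<in>UNIV. c$i * G0 i x)^2)" by (rule integrable_cs[OF cE _ sE]) simp
  have iW: "integrable lborel (\<lambda>x::real^'n. (w0 x)^2)" by (rule integrable_cs[OF cW _ sW]) simp
  have Dq_nn: "Dq \<ge> 0" unfolding Dq_def by (intro integral_nonneg_AE AE_I2) simp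
  have Wq_pos: "Wq > 0" unfolding Wq_def
    by (rule integral_pos[OF cW _ _ iW, of 0]) (simp_all add: w0_zero)
  have Eq_pos: "Eq > 0" unfolding Eq_def
  proof (rule integral_pos[OF cE _ _ iE, of "(1/2) *\<^sub>R c"])
    let ?x = "(1/2) *\<^sub>R c"
    have "g1 (?x \<bullet> ?x) \<noteq> 0" using half_c(1)[OF c_pos c_small] unfolding g1_def hh_def by auto
    then show "0 < (\<Sum>i\<in>UNIV. c$i * G0 i ?x)^2"
      unfolding G0_sum using half_c(2)[OF c_pos c_small] by simp
  qed simp
  define \<Lambda> where "\<Lambda> = Dq / Eq + Eq / Wq + 1"
  have \<Lambda>_pos: "\<Lambda> > 0" 
  proof -
    have "Dq / Eq \<ge> 0" "Eq / Wq \<ge> 0" using Dq_nn Eq_pos Wq_pos by auto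
    then show ?thesis unfolding \<Lambda>_def by linarith
  qed
  have ineq1: "Dq < \<Lambda> * Eq"
  proof -
    have "\<Lambda> * Eq = Dq + Eq * Eq / Wq + Eq" unfolding \<Lambda>_def using Eq_pos Wq_pos by (simp add: field_simps)
    then show ?thesis using Eq_pos Wq_pos by (simp add: add_pos_pos)
  qed
  have ineq2: "Eq < \<Lambda> * Wq"
  proof -
    have "\<Lambda> * Wq = Dq * Wq / Eq + Eq + Wq" unfolding \<Lambda>_def using Eq_pos Wq_pos by (simp add: field_simps)
    then show ?thesis using Eq_pos Wq_pos Dq_nn by (simp add: add_nonneg_pos)
  qed
  define lam where "lam = sqrt \<Lambda>"
  have lam: "lam > 0" unfolding lam_def using \<Lambda>_pos by simp
  have lam2: "lam^2 = \<Lambda>" unfolding lam_def using \<Lambda>_pos by simp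
  have lam4: "lam^4 = \<Lambda>^2" using lam2 by (metis power_mult numeral_times_numeral semiring_norm(12) semiring_norm(13) num_double)
  define Fa where "Fa y = (\<Sum>i\<in>UNIV. H0 i i y)^2 / lam^4 - (\<Sum>i\<in>UNIV. c$i * G0 i y)^2 / lam^2 + (w0 y)^2" for y :: "real^'n"
  have cFa: "continuous_on UNIV Fa" unfolding Fa_def using lam by (intro continuous_intros cont_w0) auto
  define A where "A = integral\<^sup>L lborel (\<lambda>x. Fa ((1/lam) *\<^sub>R x))"
  have A_val: "A = lam ^ ?n * (Dq / \<Lambda>^2 - Eq / \<Lambda> + Wq)"
  proof -
    have "A = lam ^ ?n * integral\<^sup>L lborel Fa" unfolding A_def by (rule scale_int[OF cFa lam])
    also have "integral\<^sup>L lborel Fa = Dq / lam^4 - Eq / lam^2 + Wq"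
      unfolding Fa_def Dq_def Eq_def Wq_def by (rule int_lin[OF iD iE iW])
    finally show ?thesis using lam2 lam4 by simp
  qed
  define Wl where "Wl = integral\<^sup>L lborel (\<lambda>x::real^'n. (w0 ((1/lam) *\<^sub>R x))^2)"
  have Wl_val: "Wl = lam ^ ?n * Wq" unfolding Wl_def Wq_def by (rule scale_int[OF cW lam])
  have Wl_pos: "Wl > 0" using Wl_val lam Wq_pos by simp
  have A_pos: "A > 0"
  proof -
    have "Eq / \<Lambda> < Wq" using ineq2 \<Lambda>_pos by (simp add: divide_less_eq mult.commute)
    moreover have "Dq / \<Lambda>^2 \<ge> 0" using Dq_nn by simp
    ultimately show ?thesis unfolding A_val using lam by (intro mult_pos_pos) auto
  qed
  have A_lt: "A < Wl"
  proof -
    have "Dq / \<Lambda> < Eq" using ineq1 \<Lambda>_pos by (simp add: divide_less_eq mult.commute)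
    then have "(Dq / \<Lambda>) / \<Lambda> < Eq / \<Lambda>" using \<Lambda>_pos by (rule divide_strict_right_mono)
    then have "Dq / \<Lambda>^2 < Eq / \<Lambda>" by (simp add: power2_eq_square)
    then have "Dq / \<Lambda>^2 - Eq / \<Lambda> + Wq < Wq" by simp
    then show ?thesis unfolding A_val Wl_val using lam by simp
  qed
  define N where "N t = integral\<^sup>L lborel (\<lambda>x::real^'n. t * w0 ((1/lam) *\<^sub>R x) * f (t * w0 ((1/lam) *\<^sub>R x)))" for t
  define I1 where "I1 = integral\<^sup>L lborel (\<lambda>x::real^'n. w0 ((1/lam) *\<^sub>R x))"
  have cNt: "continuous_on UNIV (\<lambda>y::real^'n. t * w0 y * f (t * w0 y))" for t
    by (intro continuous_intros cont_w0 continuous_on_compose2[OF fc]) auto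
  have iNt: "integrable lborel (\<lambda>x::real^'n. t * w0 ((1/lam) *\<^sub>R x) * f (t * w0 ((1/lam) *\<^sub>R x)))" for t
    by (rule integrable_scale[OF cNt lam]) (simp add: supp_w0)
  have iWl: "integrable lborel (\<lambda>x::real^'n. (w0 ((1/lam) *\<^sub>R x))^2)"
    by (rule integrable_scale[OF cW lam]) (simp add: supp_w0)
  have iI1: "integrable lborel (\<lambda>x::real^'n. w0 ((1/lam) *\<^sub>R x))"
    by (rule integrable_scale[OF cont_w0(1) lam]) (simp add: supp_w0)
  have I1_nn: "I1 \<ge> 0" unfolding I1_def by (intro integral_nonneg_AE AE_I2) (simp add: w0_bounds)
  have N_small: "N t \<ge> - (C1 * \<bar>t\<bar> powr (q + 1) * Wl)" for t
  proof -
    have "integral\<^sup>L lborel (\<lambda>x::real^'n. - (C1 * \<bar>t\<bar> powr (q + 1)) * (w0 ((1/lam) *\<^sub>R x))^2) \<le> N t"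
      unfolding N_def
    proof (rule integral_mono)
      show "integrable lborel (\<lambda>x::real^'n. - (C1 * \<bar>t\<bar> powr (q + 1)) * (w0 ((1/lam) *\<^sub>R x))^2)"
        using iWl by simp
      show "integrable lborel (\<lambda>x::real^'n. t * w0 ((1/lam) *\<^sub>R x) * f (t * w0 ((1/lam) *\<^sub>R x)))" by (rule iNt)
      fix x :: "real^'n"
      have "\<bar>t * w0 ((1/lam) *\<^sub>R x) * f (t * w0 ((1/lam) *\<^sub>R x))\<bar> \<le> C1 * \<bar>t\<bar> powr (q + 1) * (w0 ((1/lam) *\<^sub>R x))^2"
        by (rule NL1[OF C1 q bnd w0_bounds])
      moreover have "- \<bar>t * w0 ((1/lam) *\<^sub>R x) * f (t * w0 ((1/lam) *\<^sub>R x))\<bar> \<le> t * w0 ((1/lam) *\<^sub>R x) * f (t * w0 ((1/lam) *\<^sub>R x))"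
        by (simp add: abs_le_iff[symmetric])
      moreover have "- (C1 * \<bar>t\<bar> powr (q + 1)) * (w0 ((1/lam) *\<^sub>R x))^2 = - (C1 * \<bar>t\<bar> powr (q + 1) * (w0 ((1/lam) *\<^sub>R x))^2)"
        by simp
      ultimately show "- (C1 * \<bar>t\<bar> powr (q + 1)) * (w0 ((1/lam) *\<^sub>R x))^2 \<le> t * w0 ((1/lam) *\<^sub>R x) * f (t * w0 ((1/lam) *\<^sub>R x))"
        by linarith
    qed
    then show ?thesis unfolding Wl_def by simp
  qed
  have N_large: "N t \<le> - (t^2 * Wl) + M * \<bar>t\<bar> * I1" if t: "t \<le> 0" for t
  proof -
    have "N t \<le> integral\<^sup>L lborel (\<lambda>x::real^'n. - (t^2 * (w0 ((1/lam) *\<^sub>R x))^2) + (M * \<bar>t\<bar>) * w0 ((1/lam) *\<^sub>R x))"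
      unfolding N_def
    proof (rule integral_mono)
      show "integrable lborel (\<lambda>x::real^'n. - (t^2 * (w0 ((1/lam) *\<^sub>R x))^2) + (M * \<bar>t\<bar>) * w0 ((1/lam) *\<^sub>R x))"
        using iWl iI1 by simp
      show "integrable lborel (\<lambda>x::real^'n. t * w0 ((1/lam) *\<^sub>R x) * f (t * w0 ((1/lam) *\<^sub>R x)))" by (rule iNt)
      fix x :: "real^'n"
      show "t * w0 ((1/lam) *\<^sub>R x) * f (t * w0 ((1/lam) *\<^sub>R x)) \<le> - (t^2 * (w0 ((1/lam) *\<^sub>R x))^2) + (M * \<bar>t\<bar>) * w0 ((1/lam) *\<^sub>R x)"
        using NL2[OF M(2) t w0_bounds(1)] by simp
    qed
    also have "\<dots> = - (t^2 * Wl) + M * \<bar>t\<bar> * I1"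
      unfolding Wl_def I1_def using iWl iI1 by simp
    finally show ?thesis .
  qed
  have N_lip: "\<bar>N t - N t'\<bar> \<le> ((T * (C1 * (2 * T) powr (p - 1)) + C1 * T powr q) * I1) * \<bar>t - t'\<bar>"
    if tT: "\<bar>t\<bar> \<le> T" "\<bar>t'\<bar> \<le> T" for t t' T
  proof -
    define L where "L = T * (C1 * (2 * T) powr (p - 1)) + C1 * T powr q"
    define D where "D x = t * w0 ((1/lam) *\<^sub>R x) * f (t * w0 ((1/lam) *\<^sub>R x)) - t' * w0 ((1/lam) *\<^sub>R x) * f (t' * w0 ((1/lam) *\<^sub>R x))" for x :: "real^'n"
    have iD: "integrable lborel D" unfolding D_def by (rule Bochner_Integration.integrable_diff[OF iNt iNt])
    have eq: "N t - N t' = integral\<^sup>L lborel D"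
      unfolding N_def D_def by (rule Bochner_Integration.integral_diff[OF iNt iNt, symmetric])
    have b1: "\<bar>integral\<^sup>L lborel D\<bar> \<le> integral\<^sup>L lborel (\<lambda>x. \<bar>D x\<bar>)"
      by (rule integral_abs_bound)
    have b2: "integral\<^sup>L lborel (\<lambda>x. \<bar>D x\<bar>) \<le> integral\<^sup>L lborel (\<lambda>x::real^'n. (L * \<bar>t - t'\<bar>) * w0 ((1/lam) *\<^sub>R x))"
    proof (rule integral_mono)
      show "integrable lborel (\<lambda>x. \<bar>D x\<bar>)" using iD by (rule integrable_abs)
      show "integrable lborel (\<lambda>x::real^'n. (L * \<bar>t - t'\<bar>) * w0 ((1/lam) *\<^sub>R x))"
        using iI1 by (rule integrable_mult_right)
      fix x :: "real^'n"
      have "\<bar>D x\<bar> \<le> L * (\<bar>t - t'\<bar> * w0 ((1/lam) *\<^sub>R x))"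
        unfolding D_def L_def by (rule NL3[OF lip C1 p q bnd w0_bounds tT])
      then show "\<bar>D x\<bar> \<le> (L * \<bar>t - t'\<bar>) * w0 ((1/lam) *\<^sub>R x)" by (simp only: mult.assoc)
    qed
    have b3: "integral\<^sup>L lborel (\<lambda>x::real^'n. (L * \<bar>t - t'\<bar>) * w0 ((1/lam) *\<^sub>R x)) = (L * \<bar>t - t'\<bar>) * I1"
      unfolding I1_def by (rule integral_mult_right_zero)
    have "\<bar>N t - N t'\<bar> \<le> (L * \<bar>t - t'\<bar>) * I1" using eq b1 b2 b3 by linarith
    then show ?thesis unfolding L_def by (simp only: mult_ac)
  qed
  define P where "P t = t^2 * A + N t" for t
  define U where "U t x = t * w0 ((1/lam) *\<^sub>R x)" for t and x :: "real^'n"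
  define GU where "GU t i x = t * (G0 i ((1/lam) *\<^sub>R x) / lam)" for t and i :: 'n and x :: "real^'n"
  define HU where "HU t i j x = t * (H0 i j ((1/lam) *\<^sub>R x) / lam / lam)" for t and i j :: 'n and x :: "real^'n"
  have cU: "continuous_on UNIV (U t)" for t
    unfolding U_def by (intro continuous_intros cont_scale cont_w0)
  have cGU: "continuous_on UNIV (GU t i)" for t i
    unfolding GU_def by (intro continuous_intros cont_scale cont_w0) (use lam in auto)
  have cHU: "continuous_on UNIV (HU t i j)" for t i j
    unfolding HU_def by (intro continuous_intros cont_scale cont_w0) (use lam in auto)
  have dU: "dd (U t) i (GU t i)" for t i
  proof -
    have "dd (\<lambda>x::real^'n. t * w0 ((1/lam) *\<^sub>R x)) i (\<lambda>x. t * (G0 i ((1/lam) *\<^sub>R x) / lam))"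
      by (rule dd_cmult[OF dd_scale[OF dd_w0 lam]])
    then show ?thesis unfolding U_def GU_def .
  qed
  have dGU: "dd (GU t i) j (HU t i j)" for t i j
  proof -
    have "dd (\<lambda>x::real^'n. t * (G0 i ((1/lam) *\<^sub>R x) / lam)) j (\<lambda>x. t * (H0 i j ((1/lam) *\<^sub>R x) / lam / lam))"
      by (rule dd_cmult[OF dd_div[OF dd_scale[OF dd_G0 lam]]])
    then show ?thesis unfolding GU_def HU_def .
  qed
  have L2_of: "L2 F" if "continuous_on UNIV F" "F = (\<lambda>x. Fb ((1/lam) *\<^sub>R x))" "continuous_on UNIV Fb"
    "\<forall>y. y \<notin> ?B \<longrightarrow> Fb y = 0" for F Fb :: "real^'n \<Rightarrow> real"
  proof -
    have c2: "continuous_on UNIV (\<lambda>y. (Fb y)^2)" using that(3) by (intro continuous_intros)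
    have "integrable lborel (\<lambda>x. (Fb ((1/lam) *\<^sub>R x))^2)"
      by (rule integrable_scale[OF c2 lam]) (use that(4) in auto)
    then have "integrable lborel (\<lambda>x. (F x)^2)" using that(2) by simp
    moreover have "continuous_on UNIV (\<lambda>x. (F x)^2)" using that(1) by (intro continuous_intros)
    ultimately show ?thesis unfolding L2_def using cont_meas_leb[OF that(1)] leb_integrable by blast
  qed
  have H2: "H2_with (U t) (GU t) (HU t)" for t
    unfolding H2_with_def
  proof (intro conjI allI)
    show "L2 (U t)"
      by (rule L2_of[OF cU _ _ , where Fb="\<lambda>y. t * w0 y"]) (auto simp: U_def supp_w0 intro!: continuous_intros cont_w0)
    fix i :: 'n
    show "L2 (GU t i)"
      by (rule L2_of[OF cGU _ _ , where Fb="\<lambda>y. t * (G0 i y / lam)"]) (use lam in \<open>auto simp: GU_def supp_w0 intro!: continuous_intros cont_w0\<close>)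
    show "weak_partial (U t) i (GU t i)" by (rule weak_from_dd(1)[OF cU cGU cHU dU dGU])
    fix j :: 'n
    show "L2 (HU t i j)"
      by (rule L2_of[OF cHU _ _ , where Fb="\<lambda>y. t * (H0 i j y / lam / lam)"]) (use lam in \<open>auto simp: HU_def supp_w0 intro!: continuous_intros cont_w0\<close>)
    show "weak_partial2 (U t) i j (HU t i j)" by (rule weak_from_dd(2)[OF cU cGU cHU dU dGU])
  qed
  have Pc_eq: "Pc c f (U t) (GU t) (HU t) = P t" for t
  proof -
    have e1: "(\<lambda>x. (\<Sum>i\<in>UNIV. HU t i i x)^2 - (\<Sum>i\<in>UNIV. c$i * GU t i x)^2 + (U t x)^2)
        = (\<lambda>x. t^2 * Fa ((1/lam) *\<^sub>R x))"
      unfolding HU_def GU_def U_def Fa_def using lam by (intro ext pc_pt) simp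
    have cF: "continuous_on UNIV (\<lambda>x::real^'n. t^2 * Fa ((1/lam) *\<^sub>R x))"
      by (intro continuous_intros cont_scale cFa)
    have i1: "integral\<^sup>L lebesgue (\<lambda>x::real^'n. t^2 * Fa ((1/lam) *\<^sub>R x)) = t^2 * A"
      unfolding leb_integral[OF cF] A_def by (rule integral_mult_right_zero)
    have cN: "continuous_on UNIV (\<lambda>x::real^'n. U t x * f (U t x))"
      by (intro continuous_intros cU continuous_on_compose2[OF fc cU]) auto
    have i2: "integral\<^sup>L lebesgue (\<lambda>x::real^'n. U t x * f (U t x)) = N t"
    proof -
      have "integral\<^sup>L lebesgue (\<lambda>x::real^'n. U t x * f (U t x)) = integral\<^sup>L lborel (\<lambda>x::real^'n. U t x * f (U t x))"
        by (rule leb_integral[OF cN])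
      also have "\<dots> = N t" unfolding N_def U_def ..
      finally show ?thesis .
    qed
    show ?thesis unfolding Pc_def e1 i1 i2 P_def ..
  qed
  define \<delta> where "\<delta> = (A / (2 * C1 * Wl)) powr (1 / (q - 1))"
  have \<delta>_pos: "\<delta> > 0" unfolding \<delta>_def using A_pos C1 Wl_pos by simp
  define a where "a = min 1 \<delta>"
  have a: "0 < a" "a \<le> 1" "a \<le> \<delta>" unfolding a_def using \<delta>_pos by auto
  define t0 where "t0 = - a"
  have P_t0: "P t0 > 0"
  proof -
    have "a powr (q - 1) \<le> \<delta> powr (q - 1)" by (rule powr_mono2) (use a q in auto)
    also have "\<delta> powr (q - 1) = A / (2 * C1 * Wl)"
      unfolding \<delta>_def powr_powr using q A_pos C1 Wl_pos by (simp add: powr_one)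
    finally have ap: "a powr (q - 1) \<le> A / (2 * C1 * Wl)" .
    have "\<bar>t0\<bar> powr (q + 1) = a powr (q - 1) * a^2"
    proof -
      have "\<bar>t0\<bar> powr (q + 1) = a powr ((q - 1) + 2)" unfolding t0_def using a by (simp add: add.commute)
      also have "\<dots> = a powr (q - 1) * a powr 2" by (rule powr_add)
      finally show ?thesis using a by simp
    qed
    then have "C1 * \<bar>t0\<bar> powr (q + 1) * Wl = (C1 * Wl * a^2) * a powr (q - 1)" by (simp add: mult_ac)
    also have "\<dots> \<le> (C1 * Wl * a^2) * (A / (2 * C1 * Wl))"
      by (rule mult_left_mono[OF ap]) (use C1 Wl_pos in simp)
    also have "\<dots> = a^2 * A / 2" using C1 Wl_pos by (simp add: field_simps)
    finally have b: "C1 * \<bar>t0\<bar> powr (q + 1) * Wl \<le> a^2 * A / 2" .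
    have "P t0 \<ge> a^2 * A - C1 * \<bar>t0\<bar> powr (q + 1) * Wl"
      using N_small[of t0] unfolding P_def t0_def by simp
    moreover have "a^2 * A > 0" using a A_pos by simp
    ultimately show ?thesis using b by linarith
  qed
  define T where "T = M * I1 / (Wl - A) + 2"
  have WA: "Wl - A > 0" using A_lt by simp
  have T_ge: "T \<ge> 2" unfolding T_def using M I1_nn WA by simp
  have P_T: "P (- T) < 0"
  proof -
    have "P (- T) \<le> T^2 * A - T^2 * Wl + M * T * I1"
      using N_large[of "- T"] T_ge unfolding P_def by simp
    also have "\<dots> = T * (M * I1 - T * (Wl - A))" by (simp add: algebra_simps power2_eq_square)
    also have "T * (Wl - A) = M * I1 + 2 * (Wl - A)" unfolding T_def using WA by (simp add: field_simps)
    also have "T * (M * I1 - (M * I1 + 2 * (Wl - A))) < 0" using T_ge WA by (simp add: mult_pos_neg)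
    finally show ?thesis .
  qed
  define K where "K = (T * (C1 * (2 * T) powr (p - 1)) + C1 * T powr q) * I1"
  have K_nn: "K \<ge> 0" unfolding K_def using T_ge C1 I1_nn by simp
  have "K-lipschitz_on {-T..T} N"
  proof (rule lipschitz_onI)
    fix x y assume "x \<in> {-T..T}" "y \<in> {-T..T}"
    then have "\<bar>x\<bar> \<le> T" "\<bar>y\<bar> \<le> T" by auto
    from N_lip[OF this] show "dist (N x) (N y) \<le> K * dist x y" unfolding K_def by (simp add: dist_real_def)
  qed (rule K_nn)
  then have cN: "continuous_on {-T..T} N" by (rule lipschitz_on_continuous_on)
  have cP: "continuous_on {-T..t0} P"
  proof -
    have "continuous_on {-T..T} P" unfolding P_def by (intro continuous_intros cN)
    moreover have "{-T..t0} \<subseteq> {-T..T}" unfolding t0_def using a T_ge by auto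
    ultimately show ?thesis by (rule continuous_on_subset)
  qed
  have "-T \<le> t0" unfolding t0_def using a T_ge by simp
  then obtain ts where ts: "-T \<le> ts" "ts \<le> t0" "P ts = 0"
    using IVT'[of P "-T" 0 t0] P_T P_t0 cP by fastforce
  have ts_neg: "ts < 0" using ts(2) a unfolding t0_def by simp
  have nz: "\<not> (AE x in lebesgue. U ts x = 0)"
  proof
    assume ae: "AE x in lebesgue. U ts x = 0"
    have cU2: "continuous_on UNIV (\<lambda>x. (U ts x)^2)" using cU by (intro continuous_intros)
    have "integral\<^sup>L lebesgue (\<lambda>x. (U ts x)^2) = integral\<^sup>L lebesgue (\<lambda>x::real^'n. 0)"
      by (rule integral_cong_AE) (use ae cont_meas_leb[OF cU2] in auto)
    then have z: "integral\<^sup>L lborel (\<lambda>x. (U ts x)^2) = 0" using leb_integral[OF cU2] by simp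
    have "integral\<^sup>L lborel (\<lambda>x. (U ts x)^2) = ts^2 * Wl"
      unfolding U_def Wl_def power_mult_distrib by (rule integral_mult_right_zero)
    then show False using z ts_neg Wl_pos by simp
  qed
  have "H2_with (U ts) (GU ts) (HU ts) \<and> \<not> (AE x in lebesgue. U ts x = 0) \<and> Pc c f (U ts) (GU ts) (HU ts) = 0"
    using H2[of ts] nz Pc_eq[of ts] ts(3) by simp
  then show ?thesis by (intro exI)
qed


end
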